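(* Let $\mathbf{F}$ be a field of characteristic $2$, $m\ge1$, and let $A\in\{0,1\}^m$ with $|A|\ge 3$. Then $$\sum_{0<L<A} x^{A-L}\,\mathrm{Tr}(L)\in\ker(\pi).$$ Moreover, let $i=\ell(A)$ and $j=\ell(A')$. Then for every $L$ with $0<L<A$, $$\mathrm{LT}\big(\pi(x^{A-L}\mathrm{Tr}(L))\big)\le x_i x_j\, y^{(A')'}$$ (in the graded reverse lexicographic order with $y_1>x_1>y_2>x_2>\cdots>y_m>x_m$), with equality if and only if $A-L=\Delta_i$ or $A-L=\Delta_j$.
   Context: Let $S=\mathbf{F}[x_1,y_1,\dots,x_m,y_m]$ with the $\mathbf{F}$-algebra automorphism $\sigma(x_i)=x_i$, $\sigma(y_i)=y_i+x_i$ of order 2, and let $S^{C_2}$ be the ring of $\sigma$-invariants. For $A=(a_1,\dots,a_m)\in\mathbb{N}^m$ write $x^A=\prod_s x_s^{a_s}$, $y^A=\prod_s y_s^{a_s}$, $N^A=\prod_s N_s^{a_s}$ where $N_s=y_s^2+x_sy_s$, and $|A|=\sum_s a_s$. $A\le B$ means componentwise $\le$; $L<A$ means $L\le A$, $L\ne A$. $\Delta_s$ is the sequence with $1$ in position $s$ and $0$ elsewhere. For $A\in\{0,1\}^m$, $\mathrm{tr}(A)=y^A+\prod_s(y_s+x_s)^{a_s}\in S^{C_2}$. For $A\ne0$, $\ell(A)=\min\{\ell:a_\ell=1\}$ and $A'$ is $A$ with the entry at position $\ell(A)$ set to $0$. Let $R=\mathbf{F}[x_1,\dots,x_m,N_1,\dots,N_m]$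 be a polynomial ring in $2m$ indeterminates and $Q=R[\mathrm{Tr}(A): A\in\{0,1\}^m, |A|\ge2]$ a polynomial ring over $R$ in the indeterminates $\mathrm{Tr}(A)$. Let $\pi:Q\to S^{C_2}$ be the $\mathbf{F}$-algebra homomorphism with $\pi(x_i)=x_i$, $\pi(N_i)=y_i^2+x_iy_i$, $\pi(\mathrm{Tr}(A))=\mathrm{tr}(A)$. Convention: for $C\in\{0,1\}^m$ with $|C|\le 1$, $\mathrm{Tr}(C)$ denotes the element of $Q$ given by $\mathrm{Tr}(0)=0$ and $\mathrm{Tr}(\Delta_s)=x_s$ (so that $\pi(\mathrm{Tr}(C))=\mathrm{tr}(C)$ for all $C\in\{0,1\}^m$). $\mathrm{LT}$ denotes the lead term. *)

theory Defs
  imports Main "HOL-Library.Poly_Mapping"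
begin

text \<open>A polynomial over a coefficient ring 'a in variables of type 'v is an element of
  the type of finitely supported maps from monomials to coefficients (monomial = exponent vector, mapped to its coefficient);
  ring operations are those of HOL-Library.Poly_Mapping (convolution product).\<close>

type_synonym ('v, 'a) mpoly = "('v \<Rightarrow>\<^sub>0 nat) \<Rightarrow>\<^sub>0 'a"

definition Var :: "'v \<Rightarrow> ('v, 'a::comm_semiring_1) mpoly" where
  "Var v = Poly_Mapping.single (Poly_Mapping.single v 1) 1"

definition Const :: "'a::comm_semiring_1 \<Rightarrow> ('v, 'a) mpoly" where
  "Const c = Poly_Mapping.single 0 c"

definition subst_hom :: "('v \<Rightarrow> ('w, 'a::comm_semiring_1) mpoly) \<Rightarrow> ('v, 'a) mpoly \<Rightarrow> ('w, 'a) mpoly" where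
  "subst_hom f p = (\<Sum>mu\<in>Poly_Mapping.keys p. Const (Poly_Mapping.lookup p mu) * prod (\<lambda>v. f v ^ Poly_Mapping.lookup mu v) (Poly_Mapping.keys mu))"

datatype svar = SX nat | SY nat

abbreviation xS :: "nat \<Rightarrow> (svar, 'a::comm_semiring_1) mpoly" where "xS i \<equiv> Var (SX i)"
abbreviation yS :: "nat \<Rightarrow> (svar, 'a::comm_semiring_1) mpoly" where "yS i \<equiv> Var (SY i)"

text \<open>Subsets A of {1..m} encode the 0/1-sequences A in {0,1}^m (A = support).
  tr(A) = y^A + prod_s (y_s + x_s)^{a_s}.\<close>
definition tr :: "nat set \<Rightarrow> (svar, 'a::comm_semiring_1) mpoly" where
  "tr A = (\<Prod>s\<in>A. yS s) + (\<Prod>s\<in>A. yS s + xS s)"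

datatype qvar = QX nat | QN nat | QT "nat set"

text \<open>Tr(C) in Q, with the convention Tr(0) = 0 and Tr(Delta_s) = x_s.\<close>
definition TrQ :: "nat set \<Rightarrow> (qvar, 'a::comm_semiring_1) mpoly" where
  "TrQ C = (if C = {} then 0 else if card C = 1 then Var (QX (the_elem C)) else Var (QT C))"

definition pi_img :: "qvar \<Rightarrow> (svar, 'a::comm_semiring_1) mpoly" where
  "pi_img v = (case v of QX i \<Rightarrow> xS i | QN i \<Rightarrow> yS i ^ 2 + xS i * yS i | QT A \<Rightarrow> tr A)"

definition piQ :: "(qvar, 'a::comm_semiring_1) mpoly \<Rightarrow> (svar, 'a) mpoly" where
  "piQ = subst_hom pi_img"

text \<open>rank: a larger rank means a smaller variable.\<close>
fun rank :: "svar \<Rightarrow> nat" where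
  "rank (SY i) = 2 * i"
| "rank (SX i) = 2 * i + 1"

definition deg :: "(svar \<Rightarrow>\<^sub>0 nat) \<Rightarrow> nat" where
  "deg \<alpha> = (\<Sum>v\<in>Poly_Mapping.keys \<alpha>. Poly_Mapping.lookup \<alpha> v)"

text \<open>grevlex_less b a: monomial b is strictly smaller than a. Equal degree: compare at the
  smallest variable where they differ; the one with the smaller exponent there is larger.\<close>
definition grevlex_less :: "(svar \<Rightarrow>\<^sub>0 nat) \<Rightarrow> (svar \<Rightarrow>\<^sub>0 nat) \<Rightarrow> bool" where
  "grevlex_less \<beta> \<alpha> \<longleftrightarrow> deg \<beta> < deg \<alpha> \<or>
     (deg \<beta> = deg \<alpha> \<and> (\<exists>v. Poly_Mapping.lookup \<alpha> v < Poly_Mapping.lookup \<beta> v \<and>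
        (\<forall>w. rank v < rank w \<longrightarrow> Poly_Mapping.lookup \<alpha> w = Poly_Mapping.lookup \<beta> w)))"

definition grevlex_le :: "(svar \<Rightarrow>\<^sub>0 nat) \<Rightarrow> (svar \<Rightarrow>\<^sub>0 nat) \<Rightarrow> bool" where
  "grevlex_le \<beta> \<alpha> \<longleftrightarrow> \<beta> = \<alpha> \<or> grevlex_less \<beta> \<alpha>"

definition LM :: "(svar, 'a::zero) mpoly \<Rightarrow> (svar \<Rightarrow>\<^sub>0 nat)" where
  "LM p = (THE \<alpha>. \<alpha> \<in> Poly_Mapping.keys p \<and> (\<forall>\<beta>\<in>Poly_Mapping.keys p. grevlex_le \<beta> \<alpha>))"

definition LT :: "(svar, 'a::zero) mpoly \<Rightarrow> (svar, 'a) mpoly" where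
  "LT p = Poly_Mapping.single (LM p) (Poly_Mapping.lookup p (LM p))"

definition xmon :: "nat set \<Rightarrow> (svar \<Rightarrow>\<^sub>0 nat)" where
  "xmon C = (\<Sum>s\<in>C. Poly_Mapping.single (SX s) 1)"
definition ymon :: "nat set \<Rightarrow> (svar \<Rightarrow>\<^sub>0 nat)" where
  "ymon C = (\<Sum>s\<in>C. Poly_Mapping.single (SY s) 1)"

definition ell :: "nat set \<Rightarrow> nat" where "ell A = Min A"
definition prime_set :: "nat set \<Rightarrow> nat set" where "prime_set A = A - {ell A}"

end

theory Submission
  imports Defs
begin


lemma Const_0: "Const 0 = 0" by (simp add: Const_def)
lemma Const_add: "Const (a+b) = Const a + Const b" by (simp add: Const_def Poly_Mapping.single_add)

lemma subst_hom_add: "subst_hom f (p + q) = subst_hom f p + subst_hom f q"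
  unfolding subst_hom_def
  by (rule setsum_keys_plus_distrib) (simp_all add: Const_0 Const_add distrib_right)
lemma subst_hom_0: "subst_hom f 0 = 0" by (simp add: subst_hom_def)
lemma subst_hom_sum: "subst_hom f (sum g X) = (\<Sum>x\<in>X. subst_hom f (g x))"
  by (induction X rule: infinite_finite_induct) (simp_all add: subst_hom_0 subst_hom_add)
lemma subst_hom_single1: "subst_hom f (Poly_Mapping.single mu 1) = (\<Prod>v\<in>Poly_Mapping.keys mu. f v ^ Poly_Mapping.lookup mu v)"
  by (simp add: subst_hom_def Const_def)

lemma prod_single: "(\<Prod>b\<in>B. Poly_Mapping.single (k b) (c b)) = Poly_Mapping.single (\<Sum>b\<in>B. k b) (\<Prod>b\<in>B. c b)"
  by (induction B rule: infinite_finite_induct) (simp_all add: mult_single)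

definition Pm :: "'v set \<Rightarrow> ('v \<Rightarrow>\<^sub>0 'b::{comm_monoid_add,zero_neq_one})" where
  "Pm W = (\<Sum>v\<in>W. Poly_Mapping.single v 1)"

lemma lookup_Pm: "finite W \<Longrightarrow> Poly_Mapping.lookup (Pm W) v = (if v \<in> W then 1 else 0)"
  unfolding Pm_def lookup_sum lookup_single when_def by simp

lemma keys_Pm: "finite W \<Longrightarrow> Poly_Mapping.keys (Pm W) = W"
  by (auto simp: in_keys_iff lookup_Pm split: if_splits)

lemma Pm_union: "finite U \<Longrightarrow> finite V \<Longrightarrow> U \<inter> V = {} \<Longrightarrow> Pm (U \<union> V) = Pm U + Pm V"
  unfolding Pm_def by (rule sum.union_disjoint)

lemma Pm_inj: "finite U \<Longrightarrow> finite V \<Longrightarrow> (Pm U :: 'v \<Rightarrow>\<^sub>0 'b::{comm_monoid_add,zero_neq_one}) = Pm V \<Longrightarrow> U = V"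
  by (metis keys_Pm)

lemma deg_Pm: "finite W \<Longrightarrow> deg (Pm W) = card W"
  by (simp add: deg_def keys_Pm lookup_Pm)

lemma Var_prod: "finite W \<Longrightarrow> (\<Prod>v\<in>W. Var v) = (Poly_Mapping.single (Pm W) 1 :: ('v,'a::comm_semiring_1) mpoly)"
  by (simp add: Var_def prod_single Pm_def)

lemma Var_prod_img: "finite B \<Longrightarrow> inj g \<Longrightarrow> (\<Prod>s\<in>B. Var (g s)) = (Poly_Mapping.single (Pm (g ` B)) 1 :: ('v,'a::comm_semiring_1) mpoly)"
proof -
  assume "finite B" "inj g"
  then have "(\<Prod>s\<in>B. Var (g s)) = (\<Prod>v\<in>g ` B. Var v :: ('v,'a) mpoly)"
    by (simp add: prod.reindex inj_on_def inj_def)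
  then show ?thesis using \<open>finite B\<close> by (simp add: Var_prod)
qed

lemma xmon_Pm: "finite C \<Longrightarrow> xmon C = Pm (SX ` C)"
  unfolding xmon_def Pm_def by (simp add: sum.reindex inj_on_def)
lemma ymon_Pm: "finite C \<Longrightarrow> ymon C = Pm (SY ` C)"
  unfolding ymon_def Pm_def by (simp add: sum.reindex inj_on_def)

lemma char2_double:
  assumes "CHAR('a::field) = 2"
  shows "(p::('v,'a) mpoly) + p = 0"
proof -
  have "(2::'a) = 0" using of_nat_CHAR[where 'a='a] assms by simp
  then have cc: "\<And>c::'a. c + c = 0" by (metis mult_2 mult_zero_left)
  show ?thesis by (intro poly_mapping_eqI) (simp only: lookup_add lookup_zero cc)
qed

lemma char2_two:
  assumes "CHAR('a::field) = 2"
  shows "2 * (p::('v,'a) mpoly) = 0"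
  by (metis mult_2 char2_double[OF assms])

lemma piQ_mono:
  assumes "finite B" "w \<notin> QX ` B"
  shows "piQ ((\<Prod>s\<in>B. Var (QX s)) * Var w :: (qvar,'a::comm_semiring_1) mpoly) = (\<Prod>s\<in>B. xS s) * pi_img w"
proof -
  let ?W = "insert w (QX ` B)"
  have fW: "finite ?W" using assms by simp
  have "(\<Prod>s\<in>B. Var (QX s)) * Var w = (\<Prod>v\<in>?W. Var v :: (qvar,'a) mpoly)"
    using assms by (simp add: prod.reindex inj_on_def mult.commute)
  also have "\<dots> = Poly_Mapping.single (Pm ?W) 1" using fW by (rule Var_prod)
  finally have e: "(\<Prod>s\<in>B. Var (QX s)) * Var w = (Poly_Mapping.single (Pm ?W) 1 :: (qvar,'a) mpoly)" .
  have "piQ (Poly_Mapping.single (Pm ?W) 1 :: (qvar,'a) mpoly) = (\<Prod>v\<in>?W. pi_img v ^ Poly_Mapping.lookup (Pm ?W :: qvar \<Rightarrow>\<^sub>0 nat) v)"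
    using assms by (simp add: piQ_def subst_hom_single1 keys_Pm)
  also have "\<dots> = (\<Prod>v\<in>?W. pi_img v)" using fW by (intro prod.cong) (simp_all add: lookup_Pm)
  also have "\<dots> = pi_img w * (\<Prod>v\<in>QX ` B. pi_img v)" using assms by simp
  also have "\<dots> = pi_img w * (\<Prod>s\<in>B. xS s)" by (simp add: prod.reindex inj_on_def pi_img_def)
  finally show ?thesis using e by (simp add: mult.commute)
qed

lemma tr_single:
  assumes "CHAR('a::field) = 2"
  shows "(tr {l} :: (svar,'a) mpoly) = xS l"
proof -
  have "(tr {l} :: (svar,'a) mpoly) = (yS l + yS l) + xS l" by (simp add: tr_def add.assoc)
  also have "\<dots> = xS l" using char2_two[OF assms] by simp
  finally show ?thesis .
qed

lemma piQ_term:
  assumes "CHAR('a::field) = 2" "finite A" "L \<subseteq> A" "L \<noteq> {}"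
  shows "piQ ((\<Prod>s\<in>A - L. Var (QX s)) * TrQ L :: (qvar,'a) mpoly) = (\<Prod>s\<in>A - L. xS s) * tr L"
proof (cases "card L = 1")
  case True
  then obtain l where L: "L = {l}" by (auto simp: card_Suc_eq)
  have "l \<notin> A - L" using L by simp
  then have "QX l \<notin> QX ` (A - L)" by auto
  then show ?thesis using L assms by (simp add: TrQ_def piQ_mono pi_img_def tr_single)
next
  case False
  have "QT L \<notin> QX ` (A - L)" by auto
  then show ?thesis using False assms by (simp add: TrQ_def piQ_mono pi_img_def)
qed

lemma X_mono: "finite C \<Longrightarrow> (\<Prod>s\<in>C. xS s) = (Poly_Mapping.single (Pm (SX ` C)) 1 :: (svar,'a::comm_semiring_1) mpoly)"
  by (rule Var_prod_img) (auto simp: inj_def)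
lemma Y_mono: "finite C \<Longrightarrow> (\<Prod>s\<in>C. yS s) = (Poly_Mapping.single (Pm (SY ` C)) 1 :: (svar,'a::comm_semiring_1) mpoly)"
  by (rule Var_prod_img) (auto simp: inj_def)

definition monS :: "nat set \<Rightarrow> nat set \<Rightarrow> (svar \<Rightarrow>\<^sub>0 nat)" where
  "monS A T = Pm (SX ` (A - T) \<union> SY ` T)"

lemma tr_expand:
  assumes "CHAR('a::field) = 2" "finite L"
  shows "(tr L :: (svar,'a) mpoly) = (\<Sum>T\<in>Pow L - {L}. (\<Prod>s\<in>T. yS s) * (\<Prod>s\<in>L - T. xS s))"
proof -
  have "(tr L :: (svar,'a) mpoly) = (\<Prod>s\<in>L. yS s) + (\<Sum>T\<in>Pow L. (\<Prod>s\<in>T. yS s) * (\<Prod>s\<in>L - T. xS s))"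
    unfolding tr_def using assms(2) by (simp add: prod_add)
  also have "(\<Sum>T\<in>Pow L. (\<Prod>s\<in>T. yS s) * (\<Prod>s\<in>L - T. xS s)) = (\<Prod>s\<in>L. yS s) * (\<Prod>s\<in>L - L. xS s) + (\<Sum>T\<in>Pow L - {L}. (\<Prod>s\<in>T. yS s) * (\<Prod>s\<in>L - T. xS s :: (svar,'a) mpoly))"
    using assms(2) by (intro sum.remove) auto
  finally show ?thesis using char2_two[OF assms(1)] by (simp add: add.assoc[symmetric])
qed

lemma term_expand:
  assumes "CHAR('a::field) = 2" "finite A" "L \<subseteq> A"
  shows "(\<Prod>s\<in>A - L. xS s) * (tr L :: (svar,'a) mpoly) = (\<Sum>T\<in>Pow L - {L}. Poly_Mapping.single (monS A T) 1)"
proof -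
  have fL: "finite L" using assms finite_subset by blast
  have "(\<Prod>s\<in>A - L. xS s) * (tr L :: (svar,'a) mpoly) = (\<Sum>T\<in>Pow L - {L}. (\<Prod>s\<in>A - L. xS s) * ((\<Prod>s\<in>T. yS s) * (\<Prod>s\<in>L - T. xS s)))"
    by (simp add: tr_expand[OF assms(1) fL] sum_distrib_left)
  also have "\<dots> = (\<Sum>T\<in>Pow L - {L}. Poly_Mapping.single (monS A T) 1)"
  proof (rule sum.cong[OF refl])
    fix T assume T: "T \<in> Pow L - {L}"
    have d: "(A - L) \<inter> (L - T) = {}" "(A - L) \<union> (L - T) = A - T" using T assms(3) by auto
    have "(\<Prod>s\<in>A - L. xS s) * ((\<Prod>s\<in>T. yS s) * (\<Prod>s\<in>L - T. xS s)) = (\<Prod>s\<in>A - T. xS s) * (\<Prod>s\<in>T. yS s :: (svar,'a) mpoly)"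
    proof -
      have eq: "(\<Prod>s\<in>A - L. xS s) * (\<Prod>s\<in>L - T. xS s) = (\<Prod>s\<in>A - T. xS s :: (svar,'a) mpoly)"
        
      proof -
        have "(\<Prod>s\<in>A - L. xS s) * (\<Prod>s\<in>L - T. xS s) = (\<Prod>s\<in>(A - L) \<union> (L - T). xS s :: (svar,'a) mpoly)"
          using d(1) assms(2) fL by (intro prod.union_disjoint[symmetric]) auto
        then show ?thesis by (simp only: d(2))
      qed
      have "(\<Prod>s\<in>A - L. xS s) * ((\<Prod>s\<in>T. yS s) * (\<Prod>s\<in>L - T. xS s)) = (\<Prod>s\<in>T. yS s) * ((\<Prod>s\<in>A - L. xS s) * (\<Prod>s\<in>L - T. xS s) :: (svar,'a) mpoly)"
        by (rule mult.left_commute)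
      also have "\<dots> = (\<Prod>s\<in>T. yS s) * (\<Prod>s\<in>A - T. xS s)" by (simp only: eq)
      finally show ?thesis by (simp only: mult.commute)
    qed
    also have "\<dots> = Poly_Mapping.single (Pm (SX ` (A - T)) + Pm (SY ` T)) 1"
    proof -
      have "finite T" "finite (A - T)" using T fL assms(2) finite_subset by auto
      then show ?thesis by (simp add: X_mono Y_mono mult_single)
    qed
    also have "Pm (SX ` (A - T)) + Pm (SY ` T) = monS A T"
      unfolding monS_def using assms(2) fL T by (subst Pm_union) (auto intro: finite_subset)
    finally show "(\<Prod>s\<in>A - L. xS s) * ((\<Prod>s\<in>T. yS s) * (\<Prod>s\<in>L - T. xS s)) = (Poly_Mapping.single (monS A T) 1 :: (svar,'a) mpoly)" .
  qed
  finally show ?thesis .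
qed

lemma part1_S:
  assumes c: "CHAR('a::field) = 2" and fA: "finite A" and ne: "A \<noteq> {}"
  shows "(\<Sum>L | L \<subset> A \<and> L \<noteq> {}. (\<Prod>s\<in>A - L. xS s) * (tr L :: (svar,'a) mpoly)) = 0"
proof -
  let ?R = "{L. L \<subset> A \<and> L \<noteq> {}}"
  let ?t = "\<lambda>L. (\<Prod>s\<in>A - L. xS s) * (tr L :: (svar,'a) mpoly)"
  have xx: "\<And>s. (yS s + xS s) + xS s = (yS s :: (svar,'a) mpoly)"
    using char2_two[OF c] by (simp add: add.assoc)
  have "(\<Sum>L\<in>Pow A. ?t L) = (\<Sum>L\<in>Pow A. (\<Prod>s\<in>L. yS s) * (\<Prod>s\<in>A - L. xS s)) + (\<Sum>L\<in>Pow A. (\<Prod>s\<in>L. yS s + xS s) * (\<Prod>s\<in>A - L. xS s))"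
    by (simp add: tr_def algebra_simps sum.distrib)
  also have "(\<Sum>L\<in>Pow A. (\<Prod>s\<in>L. yS s) * (\<Prod>s\<in>A - L. xS s)) = (\<Prod>s\<in>A. yS s + xS s :: (svar,'a) mpoly)"
    by (rule prod_add[OF fA, of yS xS, symmetric])
  also have "(\<Sum>L\<in>Pow A. (\<Prod>s\<in>L. yS s + xS s) * (\<Prod>s\<in>A - L. xS s)) = (\<Prod>s\<in>A. (yS s + xS s) + xS s :: (svar,'a) mpoly)"
    by (rule prod_add[OF fA, of "\<lambda>s. yS s + xS s" xS, symmetric])
  also have "\<dots> = (\<Prod>s\<in>A. yS s)" by (rule prod.cong[OF refl], rule xx)
  finally have full: "(\<Sum>L\<in>Pow A. ?t L) = tr A" by (simp add: tr_def add.commute)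
  have PA: "Pow A = insert A (insert {} ?R)" by auto
  have fR: "finite ?R" using fA by (intro finite_subset[of ?R "Pow A"]) auto
  have "(\<Sum>L\<in>Pow A. ?t L) = ?t A + (?t {} + (\<Sum>L\<in>?R. ?t L))"
    unfolding PA using ne fR by (simp add: sum.insert)
  moreover have "?t A = tr A" by simp
  moreover have "tr {} = (0::(svar,'a) mpoly)" using char2_two[OF c, of 1] by (simp add: tr_def)
  ultimately show ?thesis using full by simp
qed

lemma comb1:
  fixes L T :: "nat set"
  assumes fL: "finite L" and ne: "L \<noteq> {}" and TL: "T \<subset> L" and neq: "T \<noteq> L - {Min L}"
  shows "Max ((T - (L - {Min L})) \<union> ((L - {Min L}) - T)) \<in> L - {Min L}"
proof -
  define l0 where "l0 = Min L"
  define L' where "L' = L - {l0}"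
  define D where "D = (T - L') \<union> (L' - T)"
  have l0L: "l0 \<in> L" using fL ne by (simp add: l0_def)
  have l0min: "\<And>x. x \<in> L \<Longrightarrow> l0 \<le> x" using fL by (simp add: l0_def)
  have fD: "finite D" using fL TL by (auto simp: D_def L'_def intro: finite_subset)
  have "Max D \<in> L'"
  proof (cases "l0 \<in> T")
    case False
    then have "T \<subseteq> L'" using TL by (auto simp: L'_def)
    then have D: "D = L' - T" by (auto simp: D_def)
    have "D \<noteq> {}" using \<open>T \<subseteq> L'\<close> neq by (auto simp: D L'_def l0_def)
    then have "Max D \<in> D" using fD by simp
    then show ?thesis using D by simp
  next
    case True
    obtain t where t: "t \<in> L" "t \<notin> T" using TL by auto
    have "t \<noteq> l0" using t True by auto
    then have tgt: "t > l0" using l0min[OF t(1)] by simp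
    have tD: "t \<in> D" using t \<open>t \<noteq> l0\<close> by (auto simp: D_def L'_def)
    then have "Max D \<ge> t" using fD by simp
    moreover have "Max D \<in> D" using fD tD by (metis Max_in empty_iff)
    ultimately show ?thesis using tgt TL by (auto simp: D_def L'_def)
  qed
  then show ?thesis by (simp add: D_def L'_def l0_def)
qed

lemma comb2:
  fixes A L :: "nat set"
  assumes fA: "finite A" and cA: "card A \<ge> 2" and LA: "L \<subset> A" and ne: "L \<noteq> {}"
  defines "i \<equiv> Min A" and "j \<equiv> Min (A - {Min A})"
  defines "A2 \<equiv> A - {Min A} - {Min (A - {Min A})}"
  shows "L - {Min L} \<noteq> A2 \<Longrightarrow> Max (((L - {Min L}) - A2) \<union> (A2 - (L - {Min L}))) \<in> A2"
    and "L - {Min L} = A2 \<longleftrightarrow> (A - L = {i} \<or> A - L = {j})"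
proof -
  have Ane: "A \<noteq> {}" using cA by auto
  have iA: "i \<in> A" using fA Ane by (simp add: i_def)
  have imin: "\<And>x. x \<in> A \<Longrightarrow> i \<le> x" using fA by (simp add: i_def)
  have A1ne: "A - {i} \<noteq> {}"
  proof
    assume "A - {i} = {}"
    then have "A \<subseteq> {i}" by auto
    then have "card A \<le> card {i}" by (intro card_mono) auto
    then have "card A \<le> 1" by simp
    then show False using cA by simp
  qed
  have jj: "j = Min (A - {i})" by (simp add: j_def i_def)
  have jA: "j \<in> A - {i}" unfolding jj using fA A1ne by (intro Min_in) auto
  have jmin: "\<And>x. x \<in> A \<Longrightarrow> x \<noteq> i \<Longrightarrow> j \<le> x" unfolding jj using fA by (intro Min_le) auto
  have ij: "i < j" using jA imin[of j] by auto
  have A2: "A2 = A - {i} - {j}" by (simp add: A2_def i_def j_def)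
  define l0 where "l0 = Min L"
  have fL: "finite L" using fA LA finite_subset by blast
  have l0L: "l0 \<in> L" using fL ne by (simp add: l0_def)
  have l0min: "\<And>x. x \<in> L \<Longrightarrow> l0 \<le> x" using fL by (simp add: l0_def)
  define L' where "L' = L - {l0}"
  have L'A: "L' \<subseteq> A" using LA by (auto simp: L'_def)
  show "L - {Min L} \<noteq> A2 \<Longrightarrow> Max (((L - {Min L}) - A2) \<union> (A2 - (L - {Min L}))) \<in> A2"
  proof -
    assume neq0: "L - {Min L} \<noteq> A2"
    then have neq: "L' \<noteq> A2" by (simp add: L'_def l0_def)
    define D where "D = (L' - A2) \<union> (A2 - L')"
    have fD: "finite D" using fA L'A by (auto simp: D_def A2 intro: finite_subset)
    have "Max D \<in> A2"
    proof (cases "j \<in> L'")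
      case True
      then have "l0 < j" using l0min[of j] by (auto simp: L'_def)
      then have "l0 = i" using jmin[of l0] l0L LA by force
      obtain k where k: "k \<in> A" "k \<notin> L" using LA by auto
      have "k \<noteq> i" using k \<open>l0 = i\<close> l0L by auto
      have "k \<noteq> j" using k True by (auto simp: L'_def)
      have kgt: "k > j" using jmin[OF k(1) \<open>k \<noteq> i\<close>] \<open>k \<noteq> j\<close> by simp
      have kD: "k \<in> D" using k \<open>k \<noteq> i\<close> \<open>k \<noteq> j\<close> by (auto simp: D_def A2 L'_def)
      then have "Max D \<ge> k" using fD by simp
      moreover have "Max D \<in> D" using fD kD by (metis Max_in empty_iff)
      ultimately show ?thesis using kgt ij L'A by (auto simp: D_def A2)
    next
      case False
      have "i \<notin> L'"
      proof
        assume "i \<in> L'"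
        then have "i \<in> L" "i \<noteq> l0" by (auto simp: L'_def)
        then have "l0 < i" using l0min by force
        then show False using imin[of l0] l0L LA by auto
      qed
      then have "L' \<subseteq> A2" using False L'A by (auto simp: A2)
      then have D: "D = A2 - L'" by (auto simp: D_def)
      have "D \<noteq> {}" using \<open>L' \<subseteq> A2\<close> neq by (auto simp: D)
      then have "Max D \<in> D" using fD by simp
      then show ?thesis using D by simp
    qed
    then show ?thesis by (simp add: D_def L'_def l0_def)
  qed
  show "L - {Min L} = A2 \<longleftrightarrow> (A - L = {i} \<or> A - L = {j})"
  proof
    assume "L - {Min L} = A2"
    then have e: "L' = A2" by (simp add: L'_def l0_def)
    have "l0 \<notin> A2" using e by (auto simp: L'_def)
    then have "l0 = i \<or> l0 = j" using l0L LA by (auto simp: A2)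
    moreover have "L = insert l0 A2" using e l0L by (auto simp: L'_def)
    ultimately show "A - L = {i} \<or> A - L = {j}" using iA jA ij by (auto simp: A2)
  next
    assume "A - L = {i} \<or> A - L = {j}"
    then show "L - {Min L} = A2"
    proof
      assume a: "A - L = {i}"
      then have L: "L = A - {i}" using LA by auto
      have "Min L = j" using L by (simp add: j_def i_def)
      then show ?thesis using L by (simp add: A2)
    next
      assume a: "A - L = {j}"
      then have L: "L = A - {j}" using LA by auto
      have "i \<in> L" using L iA ij by auto
      have "Min L = i" using fL \<open>i \<in> L\<close> L imin by (intro Min_eqI) auto
      then show ?thesis using L by (auto simp: A2)
    qed
  qed
qed



lemma rank_inj: "rank v = rank w \<Longrightarrow> v = w"
  by (cases v; cases w) (simp_all, presburger+)

lemma grevlex_antisym: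
  assumes "grevlex_le a b" "grevlex_le b a" shows "a = b"
proof (rule ccontr)
  assume ne: "a \<noteq> b"
  then have 1: "grevlex_less a b" and 2: "grevlex_less b a" using assms by (auto simp: grevlex_le_def)
  from 1 2 have d: "deg a = deg b" by (auto simp: grevlex_less_def)
  from 1 d obtain v where v: "Poly_Mapping.lookup b v < Poly_Mapping.lookup a v"
     "\<forall>w. rank v < rank w \<longrightarrow> Poly_Mapping.lookup b w = Poly_Mapping.lookup a w"
    by (auto simp: grevlex_less_def)
  from 2 d obtain u where u: "Poly_Mapping.lookup a u < Poly_Mapping.lookup b u"
     "\<forall>w. rank u < rank w \<longrightarrow> Poly_Mapping.lookup a w = Poly_Mapping.lookup b w"
    by (auto simp: grevlex_less_def)
  consider "rank v < rank u" | "rank u < rank v" | "rank u = rank v" by linarith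
  then show False
  proof cases
    case 1 then show ?thesis using v(2) u(1) by force
  next
    case 2 then show ?thesis using u(2) v(1) by force
  next
    case 3 then have "u = v" by (rule rank_inj)
    then show ?thesis using u(1) v(1) by simp
  qed
qed

lemma monS_finite: "finite A \<Longrightarrow> T \<subseteq> A \<Longrightarrow> finite (SX ` (A - T) \<union> SY ` T)"
  by (auto intro: finite_subset)

lemma monS_SX: "finite A \<Longrightarrow> T \<subseteq> A \<Longrightarrow> Poly_Mapping.lookup (monS A T) (SX s) = (if s \<in> A - T then 1 else 0)"
  unfolding monS_def by (subst lookup_Pm[OF monS_finite]) auto
lemma monS_SY: "finite A \<Longrightarrow> T \<subseteq> A \<Longrightarrow> Poly_Mapping.lookup (monS A T) (SY s) = (if s \<in> T then 1 else 0)"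
  unfolding monS_def by (subst lookup_Pm[OF monS_finite]) auto

lemma monS_inj: "finite A \<Longrightarrow> T \<subseteq> A \<Longrightarrow> T' \<subseteq> A \<Longrightarrow> monS A T = monS A T' \<Longrightarrow> T = T'"
proof -
  assume fA: "finite A" and TA: "T \<subseteq> A" and TA': "T' \<subseteq> A" and eq: "monS A T = monS A T'"
  show "T = T'"
  proof (rule set_eqI)
    fix s
    have "Poly_Mapping.lookup (monS A T) (SY s) = Poly_Mapping.lookup (monS A T') (SY s)" using eq by (rule arg_cong)
    then have e: "(if s \<in> T then 1 else 0) = (if s \<in> T' then (1::nat) else 0)"
      by (simp only: monS_SY[OF fA TA, of s] monS_SY[OF fA TA', of s])
    show "s \<in> T \<longleftrightarrow> s \<in> T'"
    proof (cases "s \<in> T")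
      case True then show ?thesis using e by (cases "s \<in> T'") auto
    next
      case False then show ?thesis using e by (cases "s \<in> T'") auto
    qed
  qed
qed

lemma deg_monS: "finite A \<Longrightarrow> T \<subseteq> A \<Longrightarrow> deg (monS A T) = card A"
proof -
  assume fA: "finite A" and TA: "T \<subseteq> A"
  have fT: "finite T" using fA TA finite_subset by blast
  have "card (SX ` (A - T) \<union> SY ` T) = card (SX ` (A - T)) + card (SY ` T)"
    using fA fT by (intro card_Un_disjoint) auto
  also have "\<dots> = card (A - T) + card T" by (simp add: card_image inj_on_def)
  also have "\<dots> = card A" using fT TA card_Diff_subset[OF fT TA] card_mono[OF fA TA] by simp
  finally show ?thesis unfolding monS_def using deg_Pm monS_finite[OF fA TA] by metis
qed

lemma grevlex_monS:
  assumes fA: "finite A" and TA: "T \<subseteq> A" and TA': "T' \<subseteq> A" and ne: "T \<noteq> T'"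
    and mx: "Max ((T - T') \<union> (T' - T)) \<in> T'"
  shows "grevlex_less (monS A T) (monS A T')"
proof -
  define D where "D = (T - T') \<union> (T' - T)"
  define s where "s = Max D"
  have fD: "finite D" using fA TA TA' by (auto simp: D_def intro: finite_subset)
  have Dne: "D \<noteq> {}" using ne by (auto simp: D_def)
  have sD: "s \<in> D" using fD Dne by (simp add: s_def)
  have sT': "s \<in> T'" using mx by (simp add: s_def D_def)
  have sT: "s \<notin> T" using sD sT' by (auto simp: D_def)
  have big: "\<And>t. s < t \<Longrightarrow> (t \<in> T \<longleftrightarrow> t \<in> T')"
  proof -
    fix t assume "s < t"
    show "t \<in> T \<longleftrightarrow> t \<in> T'"
    proof (rule ccontr)
      assume "\<not> (t \<in> T \<longleftrightarrow> t \<in> T')"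
      then have "t \<in> D" by (auto simp: D_def)
      then have "t \<le> s" using fD by (simp add: s_def)
      then show False using \<open>s < t\<close> by simp
    qed
  qed
  have l1: "Poly_Mapping.lookup (monS A T') (SX s) < Poly_Mapping.lookup (monS A T) (SX s)"
    using sT sT' TA' fA TA by (simp add: monS_SX subsetD)
  moreover have l2: "\<forall>w. rank (SX s) < rank w \<longrightarrow> Poly_Mapping.lookup (monS A T') w = Poly_Mapping.lookup (monS A T) w"
  proof (intro allI impI)
    fix w assume r: "rank (SX s) < rank w"
    show "Poly_Mapping.lookup (monS A T') w = Poly_Mapping.lookup (monS A T) w"
    proof (cases w)
      case (SX t)
      then have "s < t" using r by simp
      then show ?thesis using SX big[of t] fA TA TA' by (simp add: monS_SX)
    next
      case (SY t)
      then have "s < t" using r by simp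
      then show ?thesis using SY big[of t] fA TA TA' by (simp add: monS_SY)
    qed
  qed
  show ?thesis unfolding grevlex_less_def
  proof (rule disjI2, rule conjI)
    show "deg (monS A T) = deg (monS A T')" using deg_monS[OF fA TA] deg_monS[OF fA TA'] by simp
    show "\<exists>v. Poly_Mapping.lookup (monS A T') v < Poly_Mapping.lookup (monS A T) v \<and>
        (\<forall>w. rank v < rank w \<longrightarrow> Poly_Mapping.lookup (monS A T') w = Poly_Mapping.lookup (monS A T) w)"
      using l1 l2 by blast
  qed
qed

lemma LM_eq:
  assumes "Poly_Mapping.keys p = K" "b0 \<in> K" "\<forall>b\<in>K. grevlex_le b b0"
  shows "LM p = b0"
  unfolding LM_def
proof (rule the_equality)
  show "b0 \<in> Poly_Mapping.keys p \<and> (\<forall>b\<in>Poly_Mapping.keys p. grevlex_le b b0)" using assms by simp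
next
  fix a assume "a \<in> Poly_Mapping.keys p \<and> (\<forall>b\<in>Poly_Mapping.keys p. grevlex_le b a)"
  then show "a = b0" using assms grevlex_antisym by blast
qed

lemma single1_inj: "Poly_Mapping.single a (1::'a::zero_neq_one) = Poly_Mapping.single b 1 \<longleftrightarrow> a = b"
  by (metis lookup_single_eq lookup_single_not_eq one_neq_zero)



lemma sum_singles: "finite F \<Longrightarrow> inj_on g F \<Longrightarrow> (\<Sum>T\<in>F. Poly_Mapping.single (g T) (1::'b::{comm_monoid_add,zero_neq_one})) = Pm (g ` F)"
  by (simp add: Pm_def sum.reindex)

lemma part2:
  assumes c: "CHAR('a::field) = 2" and fA: "finite A" and cA: "card A \<ge> 2"
    and LA: "L \<subset> A" and Lne: "L \<noteq> {}"
  defines "p \<equiv> piQ ((\<Prod>s\<in>A - L. Var (QX s)) * TrQ L :: (qvar, 'a) mpoly)"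
  defines "A2 \<equiv> A - {Min A} - {Min (A - {Min A})}"
  shows "grevlex_le (LM p) (monS A A2) \<and>
         (LT p = Poly_Mapping.single (monS A A2) 1 \<longleftrightarrow> A - L = {Min A} \<or> A - L = {Min (A - {Min A})})"
proof -
  define F where "F = Pow L - {L}"
  define L' where "L' = L - {Min L}"
  have fL: "finite L" using fA LA finite_subset by blast
  have fF: "finite F" using fL by (simp add: F_def)
  have FA: "\<And>T. T \<in> F \<Longrightarrow> T \<subseteq> A" using LA by (auto simp: F_def)
  have inj: "inj_on (monS A) F" using monS_inj[OF fA] FA by (meson inj_onI)
  have pe: "p = Pm (monS A ` F)"
    unfolding p_def using piQ_term[OF c fA _ Lne] term_expand[OF c fA] LA sum_singles[OF fF inj]
    by (simp add: F_def less_imp_le)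
  have keys: "Poly_Mapping.keys p = monS A ` F" using pe fF by (simp add: keys_Pm)
  have MinL: "Min L \<in> L" using fL Lne by simp
  have L'F: "L' \<in> F" using MinL by (auto simp: F_def L'_def)
  have L'A: "L' \<subseteq> A" using LA by (auto simp: L'_def)
  have le: "\<forall>b\<in>monS A ` F. grevlex_le b (monS A L')"
  proof
    fix b assume "b \<in> monS A ` F"
    then obtain T where T: "T \<in> F" "b = monS A T" by auto
    show "grevlex_le b (monS A L')"
    proof (cases "T = L'")
      case True then show ?thesis using T by (simp add: grevlex_le_def)
    next
      case False
      have "T \<subset> L" using T by (auto simp: F_def)
      then have "Max ((T - L') \<union> (L' - T)) \<in> L'" using comb1[OF fL Lne _ False[unfolded L'_def]] by (simp add: L'_def)
      then have "grevlex_less (monS A T) (monS A L')" using grevlex_monS[OF fA FA[OF T(1)] L'A False] by simp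
      then show ?thesis using T by (simp add: grevlex_le_def)
    qed
  qed
  have LM: "LM p = monS A L'" using LM_eq[OF keys _ le] L'F by simp
  have lk: "Poly_Mapping.lookup p (monS A L') = 1" using pe fF L'F by (simp add: lookup_Pm)
  have LT: "LT p = Poly_Mapping.single (monS A L') 1" by (simp add: LT_def LM lk)
  have A2A: "A2 \<subseteq> A" by (auto simp: A2_def)
  have g: "grevlex_le (monS A L') (monS A A2)"
  proof (cases "L' = A2")
    case True then show ?thesis by (simp add: grevlex_le_def)
  next
    case False
    have "Max ((L' - A2) \<union> (A2 - L')) \<in> A2" using comb2(1)[OF fA cA LA Lne] False by (simp add: L'_def A2_def)
    then have "Max ((L' - A2) \<union> (A2 - L')) \<in> A2" by blast
    then have "grevlex_less (monS A L') (monS A A2)" using grevlex_monS[OF fA L'A A2A False] by (simp add: Un_commute)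
    then show ?thesis by (simp add: grevlex_le_def)
  qed
  have "LT p = Poly_Mapping.single (monS A A2) 1 \<longleftrightarrow> L' = A2"
    unfolding LT single1_inj using monS_inj[OF fA L'A A2A] by blast
  also have "\<dots> \<longleftrightarrow> A - L = {Min A} \<or> A - L = {Min (A - {Min A})}"
    using comb2(2)[OF fA cA LA Lne] by (simp add: L'_def A2_def)
  finally show ?thesis using g LM by simp
qed


theorem mainTheorem2:
  fixes m :: nat and A :: "nat set"
  assumes char2: "CHAR('a::field) = 2"
    and m: "m \<ge> 1"
    and A: "A \<subseteq> {1..m}" and cardA: "card A \<ge> 3"
  shows "piQ ((\<Sum>L | L \<subset> A \<and> L \<noteq> {}.
                 (\<Prod>s\<in>A - L. Var (QX s)) * TrQ L) :: (qvar, 'a) mpoly) = 0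
    \<and> (let i = ell A; j = ell (prime_set A);
           target = xmon {i, j} + ymon (prime_set (prime_set A))
       in \<forall>L. L \<subset> A \<and> L \<noteq> {} \<longrightarrow>
            (let p = piQ ((\<Prod>s\<in>A - L. Var (QX s)) * TrQ L :: (qvar, 'a) mpoly)
             in grevlex_le (LM p) target \<and>
                (LT p = Poly_Mapping.single target 1 \<longleftrightarrow> A - L = {i} \<or> A - L = {j})))"
proof -
  have fA: "finite A" using A finite_subset by blast
  have cA: "card A \<ge> 2" using cardA by simp
  have Ane: "A \<noteq> {}" using cardA by auto
  let ?R = "{L. L \<subset> A \<and> L \<noteq> {}}"
  have "piQ ((\<Sum>L\<in>?R. (\<Prod>s\<in>A - L. Var (QX s)) * TrQ L) :: (qvar, 'a) mpoly)
        = (\<Sum>L\<in>?R. piQ ((\<Prod>s\<in>A - L. Var (QX s)) * TrQ L :: (qvar, 'a) mpoly))"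
    by (simp add: piQ_def subst_hom_sum)
  also have "\<dots> = (\<Sum>L\<in>?R. (\<Prod>s\<in>A - L. xS s) * (tr L :: (svar,'a) mpoly))"
    by (rule sum.cong[OF refl]) (auto intro: piQ_term[OF char2 fA])
  also have "\<dots> = 0" by (rule part1_S[OF char2 fA Ane])
  finally have P1: "piQ ((\<Sum>L\<in>?R. (\<Prod>s\<in>A - L. Var (QX s)) * TrQ L) :: (qvar, 'a) mpoly) = 0" .
  define i where "i = Min A"
  define j where "j = Min (A - {Min A})"
  define A2 where "A2 = A - {Min A} - {Min (A - {Min A})}"
  have iA: "i \<in> A" using fA Ane by (simp add: i_def)
  have A1ne: "A - {Min A} \<noteq> {}"
  proof
    assume "A - {Min A} = {}"
    then have "A \<subseteq> {Min A}" by auto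
    then have "card A \<le> card {Min A}" by (intro card_mono) auto
    then show False using cA by simp
  qed
  have jA: "j \<in> A" unfolding j_def using fA A1ne Min_in[of "A - {Min A}"] by auto
  have A2A: "A2 \<subseteq> A" by (auto simp: A2_def)
  have fA2: "finite A2" using fA A2A finite_subset by blast
  have diff: "A - A2 = {i, j}" using iA jA by (auto simp: A2_def i_def j_def)
  have tgt: "xmon {i, j} + ymon A2 = monS A A2"
  proof -
    have "xmon {i, j} + ymon A2 = Pm (SX ` {i, j}) + Pm (SY ` A2)" using fA2 by (simp add: xmon_Pm ymon_Pm)
    also have "\<dots> = Pm (SX ` {i, j} \<union> SY ` A2)" using fA2 by (intro Pm_union[symmetric]) auto
    finally show ?thesis unfolding monS_def diff .
  qed
  have P2: "\<forall>L. L \<subset> A \<and> L \<noteq> {} \<longrightarrow>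
             grevlex_le (LM (piQ ((\<Prod>s\<in>A - L. Var (QX s)) * TrQ L :: (qvar, 'a) mpoly))) (monS A A2) \<and>
                (LT (piQ ((\<Prod>s\<in>A - L. Var (QX s)) * TrQ L :: (qvar, 'a) mpoly)) = Poly_Mapping.single (monS A A2) 1 \<longleftrightarrow> A - L = {i} \<or> A - L = {j})"
  proof (intro allI impI)
    fix L assume L: "L \<subset> A \<and> L \<noteq> {}"
    show "grevlex_le (LM (piQ ((\<Prod>s\<in>A - L. Var (QX s)) * TrQ L :: (qvar, 'a) mpoly))) (monS A A2) \<and>
                (LT (piQ ((\<Prod>s\<in>A - L. Var (QX s)) * TrQ L :: (qvar, 'a) mpoly)) = Poly_Mapping.single (monS A A2) 1 \<longleftrightarrow> A - L = {i} \<or> A - L = {j})"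
      unfolding i_def j_def A2_def by (rule part2[OF char2 fA cA conjunct1[OF L] conjunct2[OF L]])
  qed
  have e: "ell A = i" "ell (prime_set A) = j" "prime_set (prime_set A) = A2"
    by (simp_all add: ell_def prime_set_def i_def j_def A2_def)
  show ?thesis unfolding Let_def e tgt using P1 P2 by blast
qed

end
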